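(* Let $a$ be a positive integer with $\sigma(a)\neq 2a$, and let $b,c$ be coprime integers with $c>0$ and $\dfrac{b}{c}=\dfrac{a}{2a-\sigma(a)}$. Let $x,y$ be positive integers such that $p=x-1$, $q=y-1$ and $r=xy-1$ are primes, $p\neq q$, and none of $p,q,r$ divides $a$. If $(cx-b)(cy-b)=b^2$, then $a(x-1)(y-1)$ and $a(xy-1)$ are amicable numbers.
   Context: For a positive integer $N$, $\sigma(N)$ denotes the sum of all positive divisors of $N$. Positive integers $M,N$ are amicable if $\sigma(M)-M=N$ and $\sigma(N)-N=M$. *)

theory Defs
  imports "HOL-Number_Theory.Number_Theory"
begin

definition sigma :: "nat \<Rightarrow> nat" where
  "sigma N = (\<Sum>d \<in> {d. d dvd N}. d)"

definition amicable :: "nat \<Rightarrow> nat \<Rightarrow> bool" where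
  "amicable M N \<longleftrightarrow> M > 0 \<and> N > 0 \<and>
     int (sigma M) - int M = int N \<and> int (sigma N) - int N = int M"

end

theory Submission
  imports Defs
begin

lemma sigma_mult_prime:
  assumes "m > 0" "prime (p::nat)" "\<not> p dvd m"
  shows "sigma (m * p) = sigma m * (p + 1)"
proof -
  let ?D = "{d. d dvd m}"
  have fin: "finite ?D" using assms(1) by simp
  have p0: "p > 0" using assms(2) prime_gt_0_nat by blast
  have eq: "{d. d dvd m * p} = ?D \<union> (\<lambda>d. p * d) ` ?D"
  proof (intro equalityI subsetI)
    fix d assume "d \<in> {d. d dvd m * p}"
    hence d: "d dvd m * p" by simp
    show "d \<in> ?D \<union> (\<lambda>d. p * d) ` ?D"
    proof (cases "p dvd d")
      case True
      then obtain e where e: "d = p * e" by blast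
      with d p0 have "e dvd m" by (simp add: mult.commute)
      thus ?thesis using e by blast
    next
      case False
      hence "coprime d p" using assms(2)
        by (metis coprime_commute prime_imp_coprime)
      hence "d dvd m" using d coprime_dvd_mult_left_iff by blast
      thus ?thesis by simp
    qed
  next
    fix d assume "d \<in> ?D \<union> (\<lambda>d. p * d) ` ?D"
    thus "d \<in> {d. d dvd m * p}" by (auto simp: mult.commute)
  qed
  have disj: "?D \<inter> (\<lambda>d. p * d) ` ?D = {}"
    using assms(3) by auto
  have inj: "inj_on (\<lambda>d. p * d) ?D" using p0 by (auto simp: inj_on_def)
  have "sigma (m * p) = sum id ?D + sum id ((\<lambda>d. p * d) ` ?D)"
    unfolding sigma_def eq using fin disj by (simp add: sum.union_disjoint)
  also have "\<dots> = sigma m + p * sigma m"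
    using inj by (simp add: sum.reindex sigma_def sum_distrib_left)
  finally show ?thesis by (simp add: algebra_simps)
qed

theorem mainTheorem4:
  fixes a x y :: nat and b c :: int
  assumes "a > 0" and "sigma a \<noteq> 2 * a"
    and "coprime b c" and "c > 0"
    and "(of_int b / of_int c :: rat) = of_nat a / (2 * of_nat a - of_nat (sigma a))"
    and "x > 0" and "y > 0"
    and "prime (x - 1)" and "prime (y - 1)" and "prime (x * y - 1)"
    and "x - 1 \<noteq> y - 1"
    and "\<not> (x - 1) dvd a" and "\<not> (y - 1) dvd a" and "\<not> (x * y - 1) dvd a"
    and "(c * int x - b) * (c * int y - b) = b ^ 2"
  shows "amicable (a * (x - 1) * (y - 1)) (a * (x * y - 1))"
proof -
  define p where "p = x - 1"
  define q where "q = y - 1"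
  define r where "r = x * y - 1"
  have pp: "prime p" using assms(8) p_def by simp
  have pq: "prime q" using assms(9) q_def by simp
  have pr: "prime r" using assms(10) r_def by simp
  have p2: "p \<ge> 2" using pp prime_ge_2_nat by blast
  have q2: "q \<ge> 2" using pq prime_ge_2_nat by blast
  have r2: "r \<ge> 2" using pr prime_ge_2_nat by blast
  have xp: "x = p + 1" using p2 p_def by simp
  have yq: "y = q + 1" using q2 q_def by simp
  have rxy: "r + 1 = x * y" using r2 r_def by simp
  have npa: "\<not> p dvd a" using assms(12) p_def by simp
  have nqa: "\<not> q dvd a" using assms(13) q_def by simp
  have nra: "\<not> r dvd a" using assms(14) r_def by simp
  have pnq: "p \<noteq> q" using assms(11) p_def q_def by simp
  have ndq: "\<not> q dvd a * p"
  proof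
    assume "q dvd a * p"
    hence "q dvd a \<or> q dvd p" using pq prime_dvd_mult_iff by blast
    moreover have "\<not> q dvd p" using pp pq pnq primes_dvd_imp_eq by blast
    ultimately show False using nqa by blast
  qed
  have ap: "a * p > 0" using assms(1) p2 by simp
  have sM: "sigma (a * p * q) = sigma a * x * y"
    using sigma_mult_prime[OF ap pq ndq] sigma_mult_prime[OF assms(1) pp npa] xp yq
    by simp
  have sN: "sigma (a * r) = sigma a * x * y"
  proof -
    have "sigma (a * r) = sigma a * (r + 1)" by (rule sigma_mult_prime[OF assms(1) pr nra])
    also have "\<dots> = sigma a * x * y" by (simp only: rxy mult.assoc)
    finally show ?thesis .
  qed
  define s where "s = sigma a"
  have ne: "(2 * of_nat a - of_nat s :: rat) \<noteq> 0"
  proof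
    assume "(2 * of_nat a - of_nat s :: rat) = 0"
    hence "(of_nat s :: rat) = of_nat (2 * a)" by simp
    hence "s = 2 * a" by (simp only: of_nat_eq_iff)
    thus False using assms(2) s_def by simp
  qed
  have c0: "(of_int c :: rat) \<noteq> 0" using assms(4) by simp
  have h1: "of_int b * (2 * of_nat a - of_nat s) = (of_nat a * of_int c :: rat)"
    using assms(5) ne c0 unfolding s_def[symmetric] by (simp add: divide_eq_eq eq_divide_eq)
  have h2: "c * (int x * int y) = b * (int x + int y)"
  proof -
    have "c * (c * (int x * int y) - b * (int x + int y)) = 0"
      using assms(15) by (simp add: algebra_simps power2_eq_square)
    thus ?thesis using assms(4) by simp
  qed
  hence h2': "of_int c * (of_nat x * of_nat y) = (of_int b * (of_nat x + of_nat y) :: rat)"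
    using arg_cong[OF h2, of "of_int :: int \<Rightarrow> rat"] by simp
  have "of_int c * ((2 * of_nat a - of_nat s) * (of_nat x * of_nat y))
        = of_int c * (of_nat a * (of_nat x + of_nat y) :: rat)"
  proof -
    have "of_int c * ((2 * of_nat a - of_nat s) * (of_nat x * of_nat y))
        = (2 * of_nat a - of_nat s) * (of_int c * (of_nat x * of_nat y) :: rat)" by (simp only: ac_simps)
    also have "\<dots> = (of_int b * (2 * of_nat a - of_nat s)) * (of_nat x + of_nat y)"
      by (simp only: h2' ac_simps)
    also have "\<dots> = of_int c * (of_nat a * (of_nat x + of_nat y) :: rat)"
      by (subst h1) (simp only: ac_simps)
    finally show ?thesis .
  qed
  hence key: "(2 * of_nat a - of_nat s) * (of_nat x * of_nat y)
        = (of_nat a * (of_nat x + of_nat y) :: rat)" using c0 by simp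
  hence keyi: "(2 * int a - int s) * (int x * int y) = int a * (int x + int y)"
  proof -
    have "(of_int ((2 * int a - int s) * (int x * int y)) :: rat) = of_int (int a * (int x + int y))"
      using key by simp
    thus ?thesis by (simp only: of_int_eq_iff)
  qed
  have ip: "int p = int x - 1" and iq: "int q = int y - 1" and ir: "int r = int x * int y - 1"
    using xp yq apply linarith+
    using arg_cong[OF rxy, of int] by simp
  have goal: "int s * int x * int y = int a * (int p * int q) + int a * int r"
    using keyi unfolding ip iq ir by (simp add: algebra_simps)
  have M: "a * (x - 1) * (y - 1) = a * p * q" using p_def q_def by simp
  have N: "a * (x * y - 1) = a * r" using r_def by simp
  have g1: "int (sigma (a * p * q)) - int (a * p * q) = int (a * r)"
    using sM goal s_def by (simp add: algebra_simps)
  have g2: "int (sigma (a * r)) - int (a * r) = int (a * p * q)"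
    using sN goal s_def by (simp add: algebra_simps)
  show ?thesis
    unfolding amicable_def M N using g1 g2 ap q2 r2 assms(1) by simp
qed

end
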